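(* Let $n\ge0$ and run the Tiden–Arnborg algorithm on $\sigma(n)$, performing sum transformations level by level. The sum transformations at level $k$ create a peak at $x_{1^k}$ (a node of level $k+1$), provided level $k+1$ is not the lowest level $n+3$.
   Context: Variables are $T$, $x_s$, $y_s$ with $s$ a string over $\{1,2\}$ ($x=x_\varepsilon$, $y=y_\varepsilon$); the level of $x_s$ or $y_s$ is $|s|+1$. For $n\ge0$, $\sigma(n)$ consists of, for all $0\le i\le n$: $x_{1^i}=^?x_{1^{i+1}}+x_{1^i2}$, $y_{2^i}=^?y_{2^i1}+y_{2^{i+1}}$, $y_{2^i1}=^?T\times x_{1^i2}$, $x=^?T\times y$, $x_{1^{i+1}}=^?x_{1^{i+2}}+x_{1^{i+1}2}$; its variables occupy levels $1,\dots,n+3$. A variable $U_i$ ($U\in\{x,y\}$) is a peak if the current system contains both $U_i=^?U_{i1}+U_{i2}$ and $U_i=^?T\times W_j$ for some $W_j$. A sum transformation at a peak $U_i$ replaces $U_i=^?U_{i1}+U_{i2}$ by $W_j=^?W_{j1}+W_{j2}$, $U_{i1}=^?T\times W_{j1}$, $U_{i2}=^?T\times W_{j2}$ (keeping $U_i=^?T\times W_j$), with $W_{j1},W_{j2}$ identified with the existing children of $W_j$ if $W_j$ already has a sum equation. The Tiden–Arnborg algorithm (for $x\times(y+z)=x\times y+x\times z$) applies sum transformations as long as possible; here all sum transformations at one level are completed before those at the next level. *)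

theory Defs
  imports Main
begin

datatype letter = L1 | L2

datatype var = T | X "letter list" | Y "letter list"

text \<open>Children: U_s |-> U_{s a}.  (Value on T is irrelevant.)\<close>
fun ch :: "var \<Rightarrow> letter \<Rightarrow> var" where
  "ch (X s) a = X (s @ [a])"
| "ch (Y s) a = Y (s @ [a])"
| "ch T a = T"

text \<open>Level of x_s or y_s is |s|+1 (T gets level 0, it has no level).\<close>
fun level :: "var \<Rightarrow> nat" where
  "level (X s) = length s + 1"
| "level (Y s) = length s + 1"
| "level T = 0"

text \<open>Equations: SumEq U V W means U =? V + W; ProdEq U W means U =? T \<times> W.\<close>
datatype eqn = SumEq var var var | ProdEq var var

definition sigma :: "nat \<Rightarrow> eqn set" where
  "sigma n = (\<Union>i\<in>{0..n}.
     { SumEq (X (replicate i L1)) (X (replicate (Suc i) L1)) (X (replicate i L1 @ [L2])),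
       SumEq (Y (replicate i L2)) (Y (replicate i L2 @ [L1])) (Y (replicate (Suc i) L2)),
       ProdEq (Y (replicate i L2 @ [L1])) (X (replicate i L1 @ [L2])),
       ProdEq (X []) (Y []),
       SumEq (X (replicate (Suc i) L1)) (X (replicate (Suc (Suc i)) L1))
             (X (replicate (Suc i) L1 @ [L2])) })"

definition peak :: "eqn set \<Rightarrow> var \<Rightarrow> bool" where
  "peak S U \<longleftrightarrow> SumEq U (ch U L1) (ch U L2) \<in> S \<and> (\<exists>W. ProdEq U W \<in> S)"

definition children :: "eqn set \<Rightarrow> var \<Rightarrow> var \<times> var" where
  "children S W = (if \<exists>A B. SumEq W A B \<in> S
                   then (SOME p. SumEq W (fst p) (snd p) \<in> S)
                   else (ch W L1, ch W L2))"

definition sum_trans :: "eqn set \<Rightarrow> var \<Rightarrow> var \<Rightarrow> eqn set" where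
  "sum_trans S U W = (case children S W of (A, B) \<Rightarrow>
      (S - {SumEq U (ch U L1) (ch U L2)})
      \<union> {SumEq W A B, ProdEq (ch U L1) A, ProdEq (ch U L2) B})"

definition step :: "nat \<Rightarrow> eqn set \<Rightarrow> eqn set \<Rightarrow> bool" where
  "step j S S' \<longleftrightarrow> (\<exists>U W. level U = j \<and> peak S U \<and> ProdEq U W \<in> S \<and> S' = sum_trans S U W)"

end

theory Submission
  imports Defs
begin

abbreviation e :: "var \<Rightarrow> eqn" where "e V \<equiv> SumEq V (ch V L1) (ch V L2)"

lemma step_cases:
  assumes "step j S S'"
  obtains U W A B where "level U = j" "peak S U" "ProdEq U W \<in> S" "children S W = (A, B)"
    "S' = (S - {e U}) \<union> {SumEq W A B, ProdEq (ch U L1) A, ProdEq (ch U L2) B}"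
proof -
  from assms obtain U W where h: "level U = j" "peak S U" "ProdEq U W \<in> S" "S' = sum_trans S U W"
    unfolding step_def by blast
  obtain A B where c: "children S W = (A, B)" by (cases "children S W") auto
  show ?thesis using that[OF h(1-3) c] h(4) c unfolding sum_trans_def by simp
qed

lemma sum_keep: "step j S S' \<Longrightarrow> e V \<in> S \<Longrightarrow> level V \<noteq> j \<Longrightarrow> e V \<in> S'"
  by (erule step_cases) auto

lemma prod_keep: "step j S S' \<Longrightarrow> ProdEq A B \<in> S \<Longrightarrow> ProdEq A B \<in> S'"
  by (erule step_cases) auto

lemma level_ch: "level U = j \<Longrightarrow> 1 \<le> j \<Longrightarrow> level (ch U a) = Suc j"
  by (cases U) auto

lemma noprod: "step j S S' \<Longrightarrow> (\<forall>W. ProdEq A W \<notin> S) \<Longrightarrow> level A \<noteq> Suc j \<Longrightarrow> 1 \<le> j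
   \<Longrightarrow> (\<forall>W. ProdEq A W \<notin> S')"
  by (erule step_cases) (auto simp: level_ch)

lemma sum_keep_rt: "(step j)\<^sup>*\<^sup>* S S' \<Longrightarrow> e V \<in> S \<Longrightarrow> level V \<noteq> j \<Longrightarrow> e V \<in> S'"
  by (induction rule: rtranclp_induct) (auto intro: sum_keep)

lemma noprod_rt: "(step j)\<^sup>*\<^sup>* S S' \<Longrightarrow> (\<forall>W. ProdEq A W \<notin> S) \<Longrightarrow> level A \<noteq> Suc j \<Longrightarrow> 1 \<le> j
   \<Longrightarrow> (\<forall>W. ProdEq A W \<notin> S')"
  by (induction rule: rtranclp_induct) (auto dest: noprod)

lemma peak_prog: "(step j)\<^sup>*\<^sup>* S0 S \<Longrightarrow> peak S0 V \<Longrightarrow> peak S V \<or> (\<exists>W. ProdEq (ch V L1) W \<in> S)"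
proof (induction rule: rtranclp_induct)
  case base then show ?case by simp
next
  case (step S S')
  from step.IH[OF step.prems] show ?case
  proof
    assume "\<exists>W. ProdEq (ch V L1) W \<in> S"
    then show ?thesis using prod_keep[OF step.hyps(2)] by blast
  next
    assume pk: "peak S V"
    from step.hyps(2) show ?thesis
    proof (rule step_cases)
      fix U W A B
      assume "S' = (S - {e U}) \<union> {SumEq W A B, ProdEq (ch U L1) A, ProdEq (ch U L2) B}"
      then show ?thesis using pk unfolding peak_def by (cases "U = V") auto
    qed
  qed
qed

abbreviation P :: "nat \<Rightarrow> var" where "P m \<equiv> X (replicate m L1)"

lemma chP: "ch (P m) L1 = P (Suc m)"
  by (simp add: replicate_append_same)

lemma sigma_sum: "m \<le> Suc n \<Longrightarrow> e (P m) \<in> sigma n"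
proof (cases m)
  case 0 then show ?thesis unfolding sigma_def by force
next
  case (Suc i)
  assume "m \<le> Suc n"
  then have "i \<le> n" using Suc by simp
  have "e (P m) = SumEq (X (replicate (Suc i) L1)) (X (replicate (Suc (Suc i)) L1))
             (X (replicate (Suc i) L1 @ [L2]))" using Suc by (simp only: ch.simps replicate_append_same, simp)
  then show ?thesis unfolding sigma_def using \<open>i \<le> n\<close> by (intro UN_I[of i]) (simp_all add: replicate_append_same)
qed

lemma sigma_prod0: "ProdEq (P 0) (Y []) \<in> sigma n"
  unfolding sigma_def by force

lemma sigma_noprod: "1 \<le> m \<Longrightarrow> ProdEq (P m) W \<notin> sigma n"
  unfolding sigma_def by (cases m) auto

theorem lemma1:
  fixes n k :: nat and Ss :: "nat \<Rightarrow> eqn set"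
  assumes "Ss 0 = sigma n"
    and "\<forall>j. 1 \<le> j \<and> j \<le> k \<longrightarrow>
           (step j)\<^sup>*\<^sup>* (Ss (j - 1)) (Ss j) \<and> (\<forall>U. level U = j \<longrightarrow> \<not> peak (Ss j) U)"
    and "1 \<le> k" and "k + 1 < n + 3"
  shows "\<not> peak (Ss (k - 1)) (X (replicate k L1)) \<and> peak (Ss k) (X (replicate k L1))"
proof
  have R: "(step (Suc i))\<^sup>*\<^sup>* (Ss i) (Ss (Suc i))" "\<forall>U. level U = Suc i \<longrightarrow> \<not> peak (Ss (Suc i)) U"
    if "Suc i \<le> k" for i using assms(2) that by auto
  have NP: "j < k \<Longrightarrow> (\<forall>W. ProdEq (P k) W \<notin> Ss j)" for j
  proof (induction j)
    case 0 then show ?case using assms(1,3) sigma_noprod by simp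
  next
    case (Suc j)
    then show ?case using noprod_rt[OF R(1)[of j]] by simp
  qed
  then show "\<not> peak (Ss (k - 1)) (P k)" unfolding peak_def using assms(3) by simp
  have SUM: "j \<le> k \<Longrightarrow> j \<le> m \<Longrightarrow> m \<le> Suc n \<Longrightarrow> e (P m) \<in> Ss j" for j m
  proof (induction j)
    case 0 then show ?case using assms(1) sigma_sum by simp
  next
    case (Suc j)
    then show ?case using sum_keep_rt[OF R(1)[of j], of "P m"] by simp
  qed
  have "j \<le> k \<Longrightarrow> peak (Ss j) (P j)" for j
  proof (induction j)
    case 0
    have "e (P 0) \<in> Ss 0" using assms(1) sigma_sum[of 0 n] by simp
    moreover have "ProdEq (P 0) (Y []) \<in> Ss 0" using assms(1) sigma_prod0[of n] by simp
    ultimately show ?case unfolding peak_def by blast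
  next
    case (Suc j)
    then have "peak (Ss j) (P j)" by simp
    from peak_prog[OF R(1)[of j, OF Suc.prems] this]
    have "peak (Ss (Suc j)) (P j) \<or> (\<exists>W. ProdEq (P (Suc j)) W \<in> Ss (Suc j))"
      unfolding chP .
    moreover have "\<not> peak (Ss (Suc j)) (P j)" using R(2)[of j] Suc by simp
    moreover have "e (P (Suc j)) \<in> Ss (Suc j)" using SUM[of "Suc j" "Suc j", OF Suc.prems order.refl] Suc.prems assms(4) by simp
    ultimately show ?case unfolding peak_def by blast
  qed
  then show "peak (Ss k) (P k)" by simp
qed

end
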